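(* Let $G'$ be an $\mathcal{R}_3$-independent graph and let $G$ be obtained from $G'$ by a double-1-extension. Then $G$ is $\mathcal{R}_3$-independent.
   Context: All graphs are finite and simple. $G$ is obtained from $G'$ by a double-1-extension if $G$ is obtained by deleting an edge $uv$ of $G'$, adding two new vertices $a,b$, and adding 7 new edges: $ab$, three edges joining $a$ to vertices of $G'$ and three edges joining $b$ to vertices of $G'$, such that $u,v\in N(a)\cup N(b)$. For $p:V\to\mathbb{R}^3$, the rigidity matrix $R(G,p)$ is the $|E|\times 3|V|$ matrix whose row for edge $xy$ has $p(x)-p(y)$ in the columns of $x$, $p(y)-p(x)$ in the columns of $y$, zeros elsewhere; a graph is $\mathcal{R}_3$-independent if these rows are linearly independent for generic $p$ (coordinates algebraically independent over $\mathbb{Q}$). *)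

theory Defs
  imports "HOL-Analysis.Analysis"
begin

definition simple_graph :: "'a set \<Rightarrow> 'a set set \<Rightarrow> bool" where
  "simple_graph V E \<longleftrightarrow> finite V \<and> (\<forall>e\<in>E. e \<subseteq> V \<and> card e = 2)"

text \<open>A polynomial is given by a finite set M of distinct monomials
  (exponent vectors supported on I) with rational coefficients c.\<close>
definition alg_indep_over_Q :: "'i set \<Rightarrow> ('i \<Rightarrow> real) \<Rightarrow> bool" where
  "alg_indep_over_Q I x \<longleftrightarrow>
     (\<forall>(M :: ('i \<Rightarrow> nat) set) (c :: ('i \<Rightarrow> nat) \<Rightarrow> rat).
        finite M \<longrightarrow> (\<forall>\<alpha>\<in>M. \<forall>i. i \<notin> I \<longrightarrow> \<alpha> i = 0) \<longrightarrow>
        (\<Sum>\<alpha>\<in>M. of_rat (c \<alpha>) * (\<Prod>i\<in>I. x i ^ \<alpha> i)) = 0 \<longrightarrow>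
        (\<forall>\<alpha>\<in>M. c \<alpha> = 0))"

definition generic3 :: "'a set \<Rightarrow> ('a \<Rightarrow> real^3) \<Rightarrow> bool" where
  "generic3 V p \<longleftrightarrow> alg_indep_over_Q (V \<times> (UNIV :: 3 set)) (\<lambda>(v, k). p v $ k)"

text \<open>Row of the rigidity matrix R(G,p) for the edge e = {x,y}, as a vector indexed by the
  columns (vertex, coordinate): p(x)-p(y) in the columns of x, p(y)-p(x) in those of y,
  zero elsewhere. (Independent of the orientation of the edge.)\<close>
definition rigidity_row :: "('a \<Rightarrow> real^3) \<Rightarrow> 'a set \<Rightarrow> ('a \<times> 3) \<Rightarrow> real" where
  "rigidity_row p e = (\<lambda>(z, k). if z \<in> e then (\<Sum>w\<in>e - {z}. (p z - p w) $ k) else 0)"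

definition rows_lin_indep :: "'a set set \<Rightarrow> ('a \<Rightarrow> real^3) \<Rightarrow> bool" where
  "rows_lin_indep E p \<longleftrightarrow>
     (\<forall>c :: 'a set \<Rightarrow> real. (\<forall>j. (\<Sum>e\<in>E. c e * rigidity_row p e j) = 0)
        \<longrightarrow> (\<forall>e\<in>E. c e = 0))"

definition R3_independent :: "'a set \<Rightarrow> 'a set set \<Rightarrow> bool" where
  "R3_independent V E \<longleftrightarrow> (\<forall>p. generic3 V p \<longrightarrow> rows_lin_indep E p)"

definition double_1_extension ::
  "'a set \<Rightarrow> 'a set set \<Rightarrow> 'a set \<Rightarrow> 'a set set \<Rightarrow> bool" where
  "double_1_extension V' E' V E \<longleftrightarrow>
     (\<exists>u v a b Na Nb. {u, v} \<in> E' \<and> a \<notin> V' \<and> b \<notin> V' \<and> a \<noteq> b \<and>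
        Na \<subseteq> V' \<and> Nb \<subseteq> V' \<and> card Na = 3 \<and> card Nb = 3 \<and>
        u \<in> Na \<union> Nb \<and> v \<in> Na \<union> Nb \<and>
        V = V' \<union> {a, b} \<and>
        E = (E' - {{u, v}}) \<union> {{a, b}} \<union> ((\<lambda>x. {a, x}) ` Na) \<union> ((\<lambda>y. {b, y}) ` Nb))"

end

theory Submission
  imports Defs "Jordan_Normal_Form.Determinant"
begin

definition pmono :: "'i set \<Rightarrow> ('i \<Rightarrow> real) \<Rightarrow> ('i \<Rightarrow> nat) \<Rightarrow> real" where
  "pmono I x \<alpha> = (\<Prod>i\<in>I. x i ^ \<alpha> i)"

definition polyrep :: "'i set \<Rightarrow> (('i \<Rightarrow> real) \<Rightarrow> real) \<Rightarrow> bool" where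
  "polyrep I f \<longleftrightarrow> (\<exists>M c. finite M \<and> (\<forall>\<alpha>\<in>M. \<forall>i. i \<notin> I \<longrightarrow> \<alpha> i = 0) \<and>
      (\<forall>x. f x = (\<Sum>\<alpha>\<in>M. of_rat (c \<alpha>) * pmono I x \<alpha>)))"

lemma polyrep_const: "polyrep I (\<lambda>x. of_rat r)"
  unfolding polyrep_def
  by (rule exI[of _ "{\<lambda>_. 0}"], rule exI[of _ "\<lambda>_. r"]) (simp add: pmono_def)

lemma polyrep_var: assumes "finite I" "i \<in> I" shows "polyrep I (\<lambda>x. x i)"
proof -
  have "pmono I x (\<lambda>j. if j = i then 1 else 0) = x i" for x
    unfolding pmono_def using assms
    by (simp add: if_distrib[of "\<lambda>n. x _ ^ n"] cong: if_cong)
  then show ?thesis unfolding polyrep_def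
    by (intro exI[of _ "{\<lambda>j. if j = i then 1 else 0}"] exI[of _ "\<lambda>_. 1"]) (simp add: assms)
qed

lemma polyrep_add: assumes "polyrep I f" "polyrep I g" shows "polyrep I (\<lambda>x. f x + g x)"
proof -
  obtain M1 c1 where 1: "finite M1" "\<forall>\<alpha>\<in>M1. \<forall>i. i \<notin> I \<longrightarrow> \<alpha> i = 0"
    "\<forall>x. f x = (\<Sum>\<alpha>\<in>M1. of_rat (c1 \<alpha>) * pmono I x \<alpha>)" using assms(1) unfolding polyrep_def by blast
  obtain M2 c2 where 2: "finite M2" "\<forall>\<alpha>\<in>M2. \<forall>i. i \<notin> I \<longrightarrow> \<alpha> i = 0"
    "\<forall>x. g x = (\<Sum>\<alpha>\<in>M2. of_rat (c2 \<alpha>) * pmono I x \<alpha>)" using assms(2) unfolding polyrep_def by blast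
  define c where "c \<alpha> = (if \<alpha> \<in> M1 then c1 \<alpha> else 0) + (if \<alpha> \<in> M2 then c2 \<alpha> else 0)" for \<alpha>
  have "f x + g x = (\<Sum>\<alpha>\<in>M1 \<union> M2. of_rat (c \<alpha>) * pmono I x \<alpha>)" for x
  proof -
    have e1: "(\<Sum>\<alpha>\<in>M1 \<union> M2. (if \<alpha> \<in> M1 then of_rat (c1 \<alpha>) * pmono I x \<alpha> else 0)) = f x"
      using 1 2 by (simp add: sum.inter_restrict[symmetric] Int_absorb1)
    have e2: "(\<Sum>\<alpha>\<in>M1 \<union> M2. (if \<alpha> \<in> M2 then of_rat (c2 \<alpha>) * pmono I x \<alpha> else 0)) = g x"
      using 1 2 by (simp add: sum.inter_restrict[symmetric] Int_absorb1)
    have "(\<Sum>\<alpha>\<in>M1 \<union> M2. of_rat (c \<alpha>) * pmono I x \<alpha>) =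
      (\<Sum>\<alpha>\<in>M1 \<union> M2. (if \<alpha> \<in> M1 then of_rat (c1 \<alpha>) * pmono I x \<alpha> else 0) +
                      (if \<alpha> \<in> M2 then of_rat (c2 \<alpha>) * pmono I x \<alpha> else 0))"
      by (rule sum.cong) (auto simp: c_def of_rat_add distrib_right)
    also have "\<dots> = f x + g x" using e1 e2 by (simp add: sum.distrib)
    finally show ?thesis by simp
  qed
  then show ?thesis unfolding polyrep_def using 1 2
    by (intro exI[of _ "M1 \<union> M2"] exI[of _ c]) auto
qed

lemma mono_add: assumes "finite I" shows "pmono I x (\<lambda>i. \<alpha> i + \<beta> i) = pmono I x \<alpha> * pmono I x \<beta>"
  unfolding pmono_def by (simp add: power_add prod.distrib)

lemma polyrep_mult: assumes "finite I" "polyrep I f" "polyrep I g" shows "polyrep I (\<lambda>x. f x * g x)"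
proof -
  obtain M1 c1 where 1: "finite M1" "\<forall>\<alpha>\<in>M1. \<forall>i. i \<notin> I \<longrightarrow> \<alpha> i = 0"
    "\<forall>x. f x = (\<Sum>\<alpha>\<in>M1. of_rat (c1 \<alpha>) * pmono I x \<alpha>)" using assms(2) unfolding polyrep_def by blast
  obtain M2 c2 where 2: "finite M2" "\<forall>\<alpha>\<in>M2. \<forall>i. i \<notin> I \<longrightarrow> \<alpha> i = 0"
    "\<forall>x. g x = (\<Sum>\<alpha>\<in>M2. of_rat (c2 \<alpha>) * pmono I x \<alpha>)" using assms(3) unfolding polyrep_def by blast
  define h where "h = (\<lambda>(\<alpha>::'a \<Rightarrow> nat, \<beta>::'a \<Rightarrow> nat). (\<lambda>i. \<alpha> i + \<beta> i))"
  define S where "S = M1 \<times> M2"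
  define M where "M = h ` S"
  define C where "C = (\<lambda>(\<alpha>, \<beta>). c1 \<alpha> * c2 \<beta>)"
  define c where "c \<gamma> = (\<Sum>ab\<in>{ab \<in> S. h ab = \<gamma>}. C ab)" for \<gamma>
  have fS: "finite S" using 1 2 by (simp add: S_def)
  have "f x * g x = (\<Sum>\<gamma>\<in>M. of_rat (c \<gamma>) * pmono I x \<gamma>)" for x
  proof -
    have "f x * g x = (\<Sum>\<alpha>\<in>M1. \<Sum>\<beta>\<in>M2. (of_rat (c1 \<alpha>) * pmono I x \<alpha>) * (of_rat (c2 \<beta>) * pmono I x \<beta>))"
      using 1 2 by (simp add: sum_product)
    also have "\<dots> = (\<Sum>ab\<in>S. of_rat (C ab) * pmono I x (h ab))"
      unfolding S_def sum.cartesian_product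
      by (rule sum.cong) (auto simp: C_def h_def mono_add[OF assms(1)] of_rat_mult)
    also have "\<dots> = (\<Sum>\<gamma>\<in>M. \<Sum>ab\<in>{ab \<in> S. h ab = \<gamma>}. of_rat (C ab) * pmono I x (h ab))"
      unfolding M_def by (rule sum.group[symmetric, OF fS finite_imageI[OF fS] subset_refl])
    also have "\<dots> = (\<Sum>\<gamma>\<in>M. of_rat (c \<gamma>) * pmono I x \<gamma>)"
      by (rule sum.cong) (auto simp: c_def of_rat_sum sum_distrib_right)
    finally show ?thesis .
  qed
  moreover have "\<forall>\<alpha>\<in>M. \<forall>i. i \<notin> I \<longrightarrow> \<alpha> i = 0" using 1 2 by (auto simp: M_def S_def h_def)
  moreover have "finite M" using fS by (simp add: M_def)
  ultimately show ?thesis unfolding polyrep_def by blast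
qed

lemma polyrep_of_int: "polyrep I (\<lambda>x. of_int k)"
  using polyrep_const[of I "of_int k"] by simp

lemma polyrep_uminus: assumes "finite I" "polyrep I f" shows "polyrep I (\<lambda>x. - f x)"
  using polyrep_mult[OF assms(1) polyrep_of_int[of I "-1"] assms(2)] by simp

lemma polyrep_diff: assumes "finite I" "polyrep I f" "polyrep I g" shows "polyrep I (\<lambda>x. f x - g x)"
  using polyrep_add[OF assms(2) polyrep_uminus[OF assms(1,3)]] by simp

lemma polyrep_sum: assumes "finite I" "finite S" "\<And>s. s \<in> S \<Longrightarrow> polyrep I (f s)"
  shows "polyrep I (\<lambda>x. \<Sum>s\<in>S. f s x)"
  using assms(2,3)
proof (induction S rule: finite_induct)
  case empty then show ?case using polyrep_of_int[of I 0] by simp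
next
  case (insert s S) then show ?case by (simp add: polyrep_add)
qed

lemma polyrep_prod: assumes "finite I" "finite S" "\<And>s. s \<in> S \<Longrightarrow> polyrep I (f s)"
  shows "polyrep I (\<lambda>x. \<Prod>s\<in>S. f s x)"
  using assms(2,3)
proof (induction S rule: finite_induct)
  case empty then show ?case using polyrep_of_int[of I 1] by simp
next
  case (insert s S) then show ?case by (simp add: polyrep_mult[OF assms(1)])
qed

lemma polyrep_if: "polyrep I f \<Longrightarrow> polyrep I g \<Longrightarrow> polyrep I (\<lambda>x. if P then f x else g x)"
  by (cases P) simp_all

lemma polyrep_generic:
  assumes "alg_indep_over_Q I x" "polyrep I f" "f y \<noteq> 0" shows "f x \<noteq> 0"
proof
  assume fx: "f x = 0"
  obtain M c where 1: "finite M" "\<forall>\<alpha>\<in>M. \<forall>i. i \<notin> I \<longrightarrow> \<alpha> i = 0"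
    "\<forall>x. f x = (\<Sum>\<alpha>\<in>M. of_rat (c \<alpha>) * pmono I x \<alpha>)" using assms(2) unfolding polyrep_def by blast
  have "\<forall>\<alpha>\<in>M. c \<alpha> = 0" using assms(1) 1 fx unfolding alg_indep_over_Q_def pmono_def by auto
  then have "f y = 0" using 1 by simp
  with assms(3) show False by simp
qed

lemma alg_indep_subset:
  assumes "alg_indep_over_Q I x" "J \<subseteq> I" "finite I" shows "alg_indep_over_Q J x"
  unfolding alg_indep_over_Q_def
proof (intro allI impI)
  fix M :: "('a \<Rightarrow> nat) set" and c
  assume M: "finite M" "\<forall>\<alpha>\<in>M. \<forall>i. i \<notin> J \<longrightarrow> \<alpha> i = 0"
    and s: "(\<Sum>\<alpha>\<in>M. of_rat (c \<alpha>) * (\<Prod>i\<in>J. x i ^ \<alpha> i)) = 0"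
  have "(\<Prod>i\<in>J. x i ^ \<alpha> i) = (\<Prod>i\<in>I. x i ^ \<alpha> i)" if "\<alpha> \<in> M" for \<alpha>
    using M that assms(2,3) by (intro prod.mono_neutral_left) auto
  then have "(\<Sum>\<alpha>\<in>M. of_rat (c \<alpha>) * (\<Prod>i\<in>I. x i ^ \<alpha> i)) = 0" using s by simp
  moreover have "\<forall>\<alpha>\<in>M. \<forall>i. i \<notin> I \<longrightarrow> \<alpha> i = 0" using M assms(2) by auto
  ultimately show "\<forall>\<alpha>\<in>M. c \<alpha> = 0" using assms(1) M(1) unfolding alg_indep_over_Q_def by blast
qed


definition pt :: "('a \<times> 3 \<Rightarrow> real) \<Rightarrow> 'a \<Rightarrow> real^3" where
  "pt x v = (\<chi> k. x (v, k))"

lemma pt_coords: "pt (\<lambda>(v, k). vec_nth (p v) k) = p"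
  unfolding pt_def by (auto simp: vec_eq_iff)

lemma row_pt: "rigidity_row (pt x) e (z, k) = (if z \<in> e then (\<Sum>w\<in>e - {z}. x (z, k) - x (w, k)) else 0)"
  unfolding rigidity_row_def pt_def by simp

lemma polyrep_row: assumes "finite V" "e \<subseteq> V"
  shows "polyrep (V \<times> UNIV) (\<lambda>x. rigidity_row (pt x) e j)"
proof -
  obtain z k where j: "j = (z, k)" by (cases j)
  have fI: "finite (V \<times> (UNIV :: 3 set))" using assms(1) by simp
  have fe: "finite e" using assms finite_subset by blast
  show ?thesis
  proof (cases "z \<in> e")
    case True
    then have "polyrep (V \<times> UNIV) (\<lambda>x. \<Sum>w\<in>e - {z}. x (z, k) - x (w, k))"
      using assms fe by (intro polyrep_sum[OF fI] polyrep_diff[OF fI] polyrep_var[OF fI]) auto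
    then show ?thesis using True by (simp add: j row_pt)
  next
    case False
    then show ?thesis using polyrep_of_int[of _ 0] by (simp add: j row_pt)
  qed
qed

lemma row_outside: "z \<notin> e \<Longrightarrow> rigidity_row p e (z, k) = 0"
  unfolding rigidity_row_def by simp

lemma gram_av: fixes R :: "'i \<Rightarrow> 't \<Rightarrow> real" shows "(\<Sum>j\<in>J. (\<Sum>t\<in>T. R i t * R j t) * v j) = (\<Sum>t\<in>T. R i t * (\<Sum>j\<in>J. v j * R j t))"
proof -
  have "(\<Sum>j\<in>J. (\<Sum>t\<in>T. R i t * R j t) * v j) = (\<Sum>j\<in>J. \<Sum>t\<in>T. R i t * (v j * R j t))"
    unfolding sum_distrib_right by (intro sum.cong refl) (simp add: mult_ac)
  also have "\<dots> = (\<Sum>t\<in>T. \<Sum>j\<in>J. R i t * (v j * R j t))" by (rule sum.swap)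
  also have "\<dots> = (\<Sum>t\<in>T. R i t * (\<Sum>j\<in>J. v j * R j t))" by (simp add: sum_distrib_left)
  finally show ?thesis .
qed

lemma gram_quad: fixes R :: "'i \<Rightarrow> 't \<Rightarrow> real" shows "(\<Sum>i\<in>J. v i * (\<Sum>j\<in>J. (\<Sum>t\<in>T. R i t * R j t) * v j)) =
   (\<Sum>t\<in>T. (\<Sum>i\<in>J. v i * R i t)^2)"
proof -
  define W where "W t = (\<Sum>j\<in>J. v j * R j t)" for t
  have "(\<Sum>i\<in>J. v i * (\<Sum>j\<in>J. (\<Sum>t\<in>T. R i t * R j t) * v j)) = (\<Sum>i\<in>J. v i * (\<Sum>t\<in>T. R i t * W t))"
    unfolding gram_av W_def ..
  also have "\<dots> = (\<Sum>i\<in>J. \<Sum>t\<in>T. (v i * R i t) * W t)"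
    unfolding sum_distrib_left by (simp add: mult.assoc)
  also have "\<dots> = (\<Sum>t\<in>T. \<Sum>i\<in>J. (v i * R i t) * W t)" by (rule sum.swap)
  also have "\<dots> = (\<Sum>t\<in>T. W t * W t)" by (simp add: sum_distrib_right W_def)
  finally show ?thesis by (simp add: power2_eq_square W_def)
qed

lemma indep_transfer:
  assumes fV: "finite V" and EV: "\<forall>e\<in>E. e \<subseteq> V" and gen: "generic3 V p" and q: "rows_lin_indep E q"
  shows "rows_lin_indep E p"
proof -
  define I where "I = V \<times> (UNIV :: 3 set)"
  have fI: "finite I" using fV by (simp add: I_def)
  have fE: "finite E" using fV EV by (meson Pow_iff finite_Pow_iff finite_subset subsetI)
  define n where "n = card E"
  obtain \<iota> where bij: "bij_betw \<iota> {0..<n} E" using ex_bij_betw_nat_finite[OF fE] n_def by blast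
  have \<iota>E: "i < n \<Longrightarrow> \<iota> i \<in> E" for i using bij by (auto simp: bij_betw_def)
  define R where "R x i t = rigidity_row (pt x) (\<iota> i) t" for x i t
  define A where "A x = mat n n (\<lambda>(i, j). \<Sum>t\<in>I. R x i t * R x j t)" for x
  have Acar: "A x \<in> carrier_mat n n" for x by (simp add: A_def)
  have Rout: "R x i t = 0" if "i < n" "t \<notin> I" for x i t
  proof -
    obtain z k where t: "t = (z, k)" by (cases t)
    have "z \<notin> V" using that t by (auto simp: I_def)
    then have "z \<notin> \<iota> i" using EV \<iota>E[OF that(1)] by blast
    then show ?thesis unfolding R_def t by (rule row_outside)
  qed
  have reidx: "(\<Sum>e\<in>E. c e * rigidity_row (pt x) e t) = (\<Sum>i\<in>{0..<n}. c (\<iota> i) * R x i t)" for c x t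
    unfolding R_def using sum.reindex_bij_betw[OF bij, of "\<lambda>e. c e * rigidity_row (pt x) e t"] by simp
  have key: "rows_lin_indep E (pt x) \<longleftrightarrow> det (A x) \<noteq> 0" for x
  proof
    assume ind: "rows_lin_indep E (pt x)"
    show "det (A x) \<noteq> 0"
    proof
      assume "det (A x) = 0"
      then obtain v where v: "v \<in> carrier_vec n" "v \<noteq> 0\<^sub>v n" "A x *\<^sub>v v = 0\<^sub>v n"
        using det_0_iff_vec_prod_zero[OF Acar] by blast
      define c where "c e = vec_index v (inv_into {0..<n} \<iota> e)" for e
      have ci: "c (\<iota> i) = vec_index v i" if "i < n" for i
        using bij that unfolding c_def bij_betw_def by (simp add: inv_into_f_f)
      define w where "w t = (\<Sum>i\<in>{0..<n}. vec_index v i * R x i t)" for t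
      have Av: "vec_index (A x *\<^sub>v v) i = (\<Sum>j\<in>{0..<n}. (\<Sum>t\<in>I. R x i t * R x j t) * vec_index v j)"
        if "i < n" for i
        using that v(1) by (simp add: A_def scalar_prod_def)
      have "(\<Sum>t\<in>I. (w t)^2) = (\<Sum>i\<in>{0..<n}. vec_index v i * vec_index (A x *\<^sub>v v) i)"
        unfolding w_def gram_quad[symmetric] by (intro sum.cong) (simp_all add: Av)
      also have "\<dots> = 0" using v(3) by simp
      finally have "\<forall>t\<in>I. (w t)^2 = 0" using fI by (simp add: sum_nonneg_eq_0_iff)
      then have w0: "w t = 0" for t
        by (cases "t \<in> I") (auto simp: w_def Rout)
      have "\<forall>j. (\<Sum>e\<in>E. c e * rigidity_row (pt x) e j) = 0"
        using w0 by (simp add: reidx w_def ci)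
      then have "\<forall>e\<in>E. c e = 0" using ind unfolding rows_lin_indep_def by blast
      then have "vec_index v i = 0" if "i < n" for i using ci[OF that] \<iota>E[OF that] by simp
      then have "v = 0\<^sub>v n" using v(1) by (intro eq_vecI) auto
      with v(2) show False by simp
    qed
  next
    assume d: "det (A x) \<noteq> 0"
    show "rows_lin_indep E (pt x)"
      unfolding rows_lin_indep_def
    proof (intro allI impI)
      fix c assume c: "\<forall>j. (\<Sum>e\<in>E. c e * rigidity_row (pt x) e j) = 0"
      define v where "v = vec n (\<lambda>i. c (\<iota> i))"
      have vc: "v \<in> carrier_vec n" by (simp add: v_def)
      have "A x *\<^sub>v v = 0\<^sub>v n"
      proof (rule eq_vecI)
        fix i assume "i < dim_vec (0\<^sub>v n)"
        then have i: "i < n" by simp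
        have "vec_index (A x *\<^sub>v v) i = (\<Sum>j\<in>{0..<n}. (\<Sum>t\<in>I. R x i t * R x j t) * c (\<iota> j))"
          using i by (simp add: A_def scalar_prod_def v_def)
        also have "\<dots> = (\<Sum>t\<in>I. R x i t * (\<Sum>j\<in>{0..<n}. c (\<iota> j) * R x j t))" by (rule gram_av)
        also have "\<dots> = 0"
        proof -
          have cj: "(\<Sum>e\<in>E. c e * rigidity_row (pt x) e t) = 0" for t using c by blast
          show ?thesis by (simp add: reidx[symmetric] cj)
        qed
        finally show "vec_index (A x *\<^sub>v v) i = vec_index (0\<^sub>v n) i" using i by simp
      qed (simp add: A_def)
      then have "v = 0\<^sub>v n" using d det_0_iff_vec_prod_zero[OF Acar] vc by blast
      then have "c (\<iota> i) = 0" if "i < n" for i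
        using that by (metis index_vec index_zero_vec(1) v_def)
      then show "\<forall>e\<in>E. c e = 0" using bij by (force simp: bij_betw_def)
    qed
  qed
  have Rpoly: "polyrep I (\<lambda>x. R x i t)" if "i < n" for i t
    unfolding R_def I_def using \<iota>E[OF that] EV fV by (intro polyrep_row) auto
  have poly: "polyrep I (\<lambda>x. det (A x))"
  proof -
    have eq: "det (A x) = (\<Sum>\<pi>\<in>{\<pi>. \<pi> permutes {0..<n}}. of_int (sign \<pi>) *
       (\<Prod>i\<in>{0..<n}. \<Sum>t\<in>I. R x i t * R x (\<pi> i) t))" for x
      unfolding det_def'[OF Acar]
    proof (intro sum.cong refl arg_cong2[where f = "(*)"] prod.cong)
      fix \<pi> i assume "\<pi> \<in> {\<pi>. \<pi> permutes {0..<n}}" "i \<in> {0..<n}"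
      then have "\<pi> i < n" by (simp add: permutes_in_image)
      then show "A x $$ (i, \<pi> i) = (\<Sum>t\<in>I. R x i t * R x (\<pi> i) t)"
        using \<open>i \<in> {0..<n}\<close> by (simp add: A_def)
    qed
    have "polyrep I (\<lambda>x. \<Sum>\<pi>\<in>{\<pi>. \<pi> permutes {0..<n}}. of_int (sign \<pi>) *
       (\<Prod>i\<in>{0..<n}. \<Sum>t\<in>I. R x i t * R x (\<pi> i) t))"
      by (intro polyrep_sum[OF fI] polyrep_mult[OF fI] polyrep_of_int polyrep_prod[OF fI]
          finite_permutations finite_atLeastLessThan Rpoly) (auto simp: permutes_in_image fI)
    then show ?thesis using eq by simp
  qed
  define X where "X = (\<lambda>(v, k). vec_nth (p v) k)"
  define Y where "Y = (\<lambda>(v, k). vec_nth (q v) k)"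
  have "det (A Y) \<noteq> 0" using key[of Y] q unfolding Y_def pt_coords by simp
  then have "det (A X) \<noteq> 0"
    using polyrep_generic[OF _ poly] gen unfolding generic3_def I_def X_def by blast
  then show ?thesis using key[of X] unfolding X_def pt_coords by simp
qed


definition det3 :: "real^3 \<Rightarrow> real^3 \<Rightarrow> real^3 \<Rightarrow> real" where
  "det3 a b c = vec_nth a 1 * (vec_nth b 2 * vec_nth c 3 - vec_nth b 3 * vec_nth c 2)
     - vec_nth a 2 * (vec_nth b 1 * vec_nth c 3 - vec_nth b 3 * vec_nth c 1)
     + vec_nth a 3 * (vec_nth b 1 * vec_nth c 2 - vec_nth b 2 * vec_nth c 1)"

lemma det3_indep:
  assumes d: "det3 a b c \<noteq> 0" and s: "\<alpha> *\<^sub>R a + \<beta> *\<^sub>R b + \<gamma> *\<^sub>R c = 0"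
  shows "\<alpha> = 0 \<and> \<beta> = 0 \<and> \<gamma> = 0"
proof -
  have e: "\<alpha> * vec_nth a k + \<beta> * vec_nth b k + \<gamma> * vec_nth c k = 0" for k
    using arg_cong[OF s, of "\<lambda>v. vec_nth v k"] by simp
  define s where "s k = \<alpha> * vec_nth a k + \<beta> * vec_nth b k + \<gamma> * vec_nth c k" for k
  have s0: "s k = 0" for k using e s_def by simp
  have "\<alpha> * det3 a b c = s 1 * (vec_nth b 2 * vec_nth c 3 - vec_nth b 3 * vec_nth c 2)
     - s 2 * (vec_nth b 1 * vec_nth c 3 - vec_nth b 3 * vec_nth c 1)
     + s 3 * (vec_nth b 1 * vec_nth c 2 - vec_nth b 2 * vec_nth c 1)"
    unfolding det3_def s_def by (simp add: algebra_simps)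
  moreover have "\<beta> * det3 a b c = vec_nth a 1 * (s 2 * vec_nth c 3 - s 3 * vec_nth c 2)
     - vec_nth a 2 * (s 1 * vec_nth c 3 - s 3 * vec_nth c 1)
     + vec_nth a 3 * (s 1 * vec_nth c 2 - s 2 * vec_nth c 1)"
    unfolding det3_def s_def by (simp add: algebra_simps)
  moreover have "\<gamma> * det3 a b c = vec_nth a 1 * (vec_nth b 2 * s 3 - vec_nth b 3 * s 2)
     - vec_nth a 2 * (vec_nth b 1 * s 3 - vec_nth b 3 * s 1)
     + vec_nth a 3 * (vec_nth b 1 * s 2 - vec_nth b 2 * s 1)"
    unfolding det3_def s_def by (simp add: algebra_simps)
  ultimately show ?thesis using d s0 by simp
qed

lemma polyrep_det3:
  assumes fI: "finite I" and "\<And>k. polyrep I (\<lambda>x. vec_nth (a x) k)" "\<And>k. polyrep I (\<lambda>x. vec_nth (b x) k)"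
    "\<And>k. polyrep I (\<lambda>x. vec_nth (c x) k)"
  shows "polyrep I (\<lambda>x. det3 (a x) (b x) (c x))"
  unfolding det3_def using assms
  by (intro polyrep_add polyrep_diff[OF fI] polyrep_mult[OF fI]) auto

lemma test3: "(1::3) \<noteq> 2 \<and> (1::3) \<noteq> 3 \<and> (2::3) \<noteq> 3" by simp

lemma nondeg:
  assumes fV: "finite V" and gen: "generic3 V p" and inV: "w0 \<in> V" "w1 \<in> V" "w2 \<in> V" "w3 \<in> V"
    and dist: "distinct [w0, w1, w2, w3]"
  shows "det3 (p w1 - p w0) (p w0 + of_rat r *\<^sub>R (p w1 - p w0) - p w2)
                 (p w0 + of_rat r *\<^sub>R (p w1 - p w0) - p w3) \<noteq> 0"
proof -
  define I where "I = V \<times> (UNIV :: 3 set)"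
  have fI: "finite I" using fV by (simp add: I_def)
  define t :: real where "t = of_rat r"
  define f where "f x = det3 (pt x w1 - pt x w0) (pt x w0 + t *\<^sub>R (pt x w1 - pt x w0) - pt x w2)
                 (pt x w0 + t *\<^sub>R (pt x w1 - pt x w0) - pt x w3)" for x
  have var: "polyrep I (\<lambda>x. vec_nth (pt x w) k)" if "w \<in> V" for w k
    unfolding pt_def using that fI by (simp add: polyrep_var I_def)
  have "polyrep I f" unfolding f_def
    using inV unfolding t_def
    by (intro polyrep_det3[OF fI]) (simp_all add: polyrep_add polyrep_diff[OF fI] polyrep_mult[OF fI] polyrep_const var)
  define y where "y = (\<lambda>(w, k::3). if w = w1 then (if k = 1 then 1 else 0)
     else if w = w2 then (if k = 1 then t else if k = 2 then 1 else 0)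
     else if w = w3 then (if k = 1 then t else if k = 3 then 1 else 0) else (0::real))"
  have "f y = 1" using dist unfolding f_def y_def det3_def pt_def by (auto simp: test3)
  then have "f (\<lambda>(v, k). vec_nth (p v) k) \<noteq> 0"
    using polyrep_generic[OF _ \<open>polyrep I f\<close>] gen unfolding generic3_def I_def by force
  then show ?thesis unfolding f_def pt_coords t_def .
qed


lemma row2: assumes "x \<noteq> y"
  shows "rigidity_row q {x, y} (z, k) =
    (if z = x then vec_nth (q x - q y) k else if z = y then vec_nth (q y - q x) k else 0)"
proof -
  have 1: "{x, y} - {x} = {y}" "{x, y} - {y} = {x}" using assms by auto
  show ?thesis unfolding rigidity_row_def using assms by (auto simp: 1)
qed

lemma row_same: assumes "e \<subseteq> V'" "a \<notin> V'" "b \<notin> V'"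
  shows "rigidity_row (p(a := qa, b := qb)) e = rigidity_row p e"
proof (rule ext, clarify)
  fix z k
  show "rigidity_row (p(a := qa, b := qb)) e (z, k) = rigidity_row p e (z, k)"
  proof -
    have w: "w \<noteq> a" "w \<noteq> b" if "w \<in> e" for w using assms that by auto
    show ?thesis unfolding rigidity_row_def by (auto intro!: sum.cong simp: w)
  qed
qed

lemma col_eqs:
  assumes aV: "a \<notin> V'" and bV: "b \<notin> V'" and ab: "a \<noteq> b" and NaV: "Na \<subseteq> V'" and NbV: "Nb \<subseteq> V'"
    and fNa: "finite Na" and fNb: "finite Nb" and fE': "finite E'" and EV: "\<forall>e\<in>E'. e \<subseteq> V'"
    and q: "q = p(a := qa, b := qb)"
    and F: "\<forall>j. (\<Sum>e\<in>(E' - {{u, v}}) \<union> {{a, b}} \<union> (\<lambda>x. {a, x}) ` Na \<union> (\<lambda>y. {b, y}) ` Nb.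
               c e * rigidity_row q e j) = 0"
  shows "c {a, b} *\<^sub>R (qa - qb) + (\<Sum>x\<in>Na. c {a, x} *\<^sub>R (qa - p x)) = 0"
    and "c {a, b} *\<^sub>R (qb - qa) + (\<Sum>y\<in>Nb. c {b, y} *\<^sub>R (qb - p y)) = 0"
    and "\<And>z k. z \<noteq> a \<Longrightarrow> z \<noteq> b \<Longrightarrow> (\<Sum>e\<in>E' - {{u, v}}. c e * rigidity_row p e (z, k))
          + (if z \<in> Na then c {a, z} * vec_nth (p z - qa) k else 0)
          + (if z \<in> Nb then c {b, z} * vec_nth (p z - qb) k else 0) = 0"
proof -
  define E0 where "E0 = E' - {{u, v}}"
  define Ea where "Ea = (\<lambda>x. {a, x}) ` Na"
  define Eb where "Eb = (\<lambda>y. {b, y}) ` Nb"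
  have d1: "E0 \<inter> {{a, b}} = {}" using EV aV unfolding E0_def by auto
  have d2: "(E0 \<union> {{a, b}}) \<inter> Ea = {}" using EV aV NaV bV unfolding E0_def Ea_def
    by (auto simp: doubleton_eq_iff)
  have d3: "(E0 \<union> {{a, b}} \<union> Ea) \<inter> Eb = {}" using EV aV NaV bV NbV ab unfolding E0_def Ea_def Eb_def
    by (auto simp: doubleton_eq_iff)
  have injA: "inj_on (\<lambda>x. {a, x}) Na" using NaV aV by (auto simp: inj_on_def doubleton_eq_iff)
  have injB: "inj_on (\<lambda>y. {b, y}) Nb" using NbV bV by (auto simp: inj_on_def doubleton_eq_iff)
  have fE0: "finite E0" using fE' by (simp add: E0_def)
  have dec: "(\<Sum>e\<in>E0 \<union> {{a, b}} \<union> Ea \<union> Eb. c e * rigidity_row q e j) =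
     (\<Sum>e\<in>E0. c e * rigidity_row q e j) + c {a, b} * rigidity_row q {a, b} j
     + (\<Sum>x\<in>Na. c {a, x} * rigidity_row q {a, x} j) + (\<Sum>y\<in>Nb. c {b, y} * rigidity_row q {b, y} j)" for j
    using d1 d2 d3 fE0 fNa fNb
    by (simp add: sum.union_disjoint Ea_def Eb_def sum.reindex[OF injA] sum.reindex[OF injB])
  have F': "(\<Sum>e\<in>E0. c e * rigidity_row q e j) + c {a, b} * rigidity_row q {a, b} j
     + (\<Sum>x\<in>Na. c {a, x} * rigidity_row q {a, x} j) + (\<Sum>y\<in>Nb. c {b, y} * rigidity_row q {b, y} j) = 0" for j
    using F dec unfolding E0_def Ea_def Eb_def by metis
  have qV: "q x = p x" if "x \<in> V'" for x using that aV bV q by auto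
  have qa: "q a = qa" and qb: "q b = qb" using q ab by auto
  have ne: "\<And>y. y \<in> Nb \<Longrightarrow> y \<noteq> b" "\<And>y. y \<in> Nb \<Longrightarrow> b \<noteq> y"
    "\<And>y. y \<in> Nb \<Longrightarrow> y \<noteq> a" "\<And>y. y \<in> Nb \<Longrightarrow> a \<noteq> y"
    "\<And>y. y \<in> Na \<Longrightarrow> y \<noteq> b" "\<And>y. y \<in> Na \<Longrightarrow> b \<noteq> y"
    "\<And>y. y \<in> Na \<Longrightarrow> y \<noteq> a" "\<And>y. y \<in> Na \<Longrightarrow> a \<noteq> y"
    using NaV NbV aV bV by auto
  have E0z: "rigidity_row q e (z, k) = 0" if "e \<in> E0" "z \<notin> V'" for e z k
    using that EV unfolding E0_def by (intro row_outside) auto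
  show "c {a, b} *\<^sub>R (qa - qb) + (\<Sum>x\<in>Na. c {a, x} *\<^sub>R (qa - p x)) = 0"
  proof (subst Finite_Cartesian_Product.vec_eq_iff, intro allI)
    fix k
    have 1: "(\<Sum>e\<in>E0. c e * rigidity_row q e (a, k)) = 0" using E0z aV by simp
    have 2: "(\<Sum>y\<in>Nb. c {b, y} * rigidity_row q {b, y} (a, k)) = 0"
      using NbV aV bV ab by (intro sum.neutral) (auto simp: row2 ne)
    have 3: "(\<Sum>x\<in>Na. c {a, x} * rigidity_row q {a, x} (a, k)) = (\<Sum>x\<in>Na. c {a, x} * vec_nth (qa - p x) k)"
      using NaV aV qV qa by (intro sum.cong refl) (auto simp: row2 ne)
    have 4: "rigidity_row q {a, b} (a, k) = vec_nth (qa - qb) k" using ab qa qb by (simp add: row2)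
    show "vec_nth (c {a, b} *\<^sub>R (qa - qb) + (\<Sum>x\<in>Na. c {a, x} *\<^sub>R (qa - p x))) k = vec_nth 0 k"
      using F'[of "(a, k)"] unfolding 1 2 3 4 by (simp add: sum_component)
  qed
  show "c {a, b} *\<^sub>R (qb - qa) + (\<Sum>y\<in>Nb. c {b, y} *\<^sub>R (qb - p y)) = 0"
  proof (subst Finite_Cartesian_Product.vec_eq_iff, intro allI)
    fix k
    have 1: "(\<Sum>e\<in>E0. c e * rigidity_row q e (b, k)) = 0" using E0z bV by simp
    have 2: "(\<Sum>x\<in>Na. c {a, x} * rigidity_row q {a, x} (b, k)) = 0"
      using NaV aV bV ab by (intro sum.neutral) (auto simp: row2 ne)
    have 3: "(\<Sum>y\<in>Nb. c {b, y} * rigidity_row q {b, y} (b, k)) = (\<Sum>y\<in>Nb. c {b, y} * vec_nth (qb - p y) k)"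
      using NbV bV qV qb by (intro sum.cong refl) (auto simp: row2 ne)
    have 4: "rigidity_row q {a, b} (b, k) = vec_nth (qb - qa) k" using ab qa qb by (simp add: row2)
    show "vec_nth (c {a, b} *\<^sub>R (qb - qa) + (\<Sum>y\<in>Nb. c {b, y} *\<^sub>R (qb - p y))) k = vec_nth 0 k"
      using F'[of "(b, k)"] unfolding 1 2 3 4 by (simp add: sum_component)
  qed
  fix z k assume za: "z \<noteq> a" and zb: "z \<noteq> b"
  have 1: "(\<Sum>e\<in>E0. c e * rigidity_row q e (z, k)) = (\<Sum>e\<in>E' - {{u, v}}. c e * rigidity_row p e (z, k))"
    using EV aV bV unfolding q E0_def by (intro sum.cong refl) (metis DiffD1 row_same)
  have 2: "(\<Sum>x\<in>Na. c {a, x} * rigidity_row q {a, x} (z, k)) =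
     (\<Sum>x\<in>Na. if z = x then c {a, z} * vec_nth (p z - qa) k else 0)"
    using NaV aV qV qa za by (intro sum.cong refl) (auto simp: row2 ne)
  have 3: "(\<Sum>y\<in>Nb. c {b, y} * rigidity_row q {b, y} (z, k)) =
     (\<Sum>y\<in>Nb. if z = y then c {b, z} * vec_nth (p z - qb) k else 0)"
    using NbV bV qV qb zb by (intro sum.cong refl) (auto simp: row2 ne)
  have 4: "rigidity_row q {a, b} (z, k) = 0" using ab za zb by (simp add: row2)
  show "(\<Sum>e\<in>E' - {{u, v}}. c e * rigidity_row p e (z, k))
          + (if z \<in> Na then c {a, z} * vec_nth (p z - qa) k else 0)
          + (if z \<in> Nb then c {b, z} * vec_nth (p z - qb) k else 0) = 0"
    using F'[of "(z, k)"] fNa fNb unfolding 1 2 3 4 by simp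
qed


lemma close_G':
  assumes indep: "rows_lin_indep E' p" and uvE: "{u, v} \<in> E'" and fE': "finite E'"
    and EV: "\<forall>e\<in>E'. e \<subseteq> V'" and aV: "a \<notin> V'" and bV: "b \<notin> V'"
    and Z: "\<And>z k. z \<noteq> a \<Longrightarrow> z \<noteq> b \<Longrightarrow>
       (\<Sum>e\<in>E' - {{u, v}}. c e * rigidity_row p e (z, k)) + lam * rigidity_row p {u, v} (z, k) = 0"
  shows "\<forall>e\<in>E' - {{u, v}}. c e = 0" and "lam = 0"
proof -
  define c' where "c' = c({u, v} := lam)"
  have "\<forall>j. (\<Sum>e\<in>E'. c' e * rigidity_row p e j) = 0"
  proof
    fix j :: "'a \<times> 3"
    obtain z k where j: "j = (z, k)" by (cases j)
    have "(\<Sum>e\<in>E'. c' e * rigidity_row p e j) =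
        c' {u, v} * rigidity_row p {u, v} j + (\<Sum>e\<in>E' - {{u, v}}. c' e * rigidity_row p e j)"
      using uvE fE' by (simp add: sum.remove)
    also have "\<dots> = (\<Sum>e\<in>E' - {{u, v}}. c e * rigidity_row p e j) + lam * rigidity_row p {u, v} j"
      unfolding c'_def by (simp add: add.commute)
    also have "\<dots> = 0"
    proof (cases "z = a \<or> z = b")
      case True
      then have "z \<notin> V'" using aV bV by auto
      then have "\<forall>e\<in>E'. rigidity_row p e j = 0" using EV unfolding j by (auto intro: row_outside)
      then show ?thesis using uvE by simp
    next
      case False
      then show ?thesis using Z[of z k] unfolding j by simp
    qed
    finally show "(\<Sum>e\<in>E'. c' e * rigidity_row p e j) = 0" .
  qed
  then have c'0: "\<forall>e\<in>E'. c' e = 0" using indep unfolding rows_lin_indep_def by blast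
  show "\<forall>e\<in>E' - {{u, v}}. c e = 0"
  proof
    fix e assume e: "e \<in> E' - {{u, v}}"
    then have "e \<noteq> {u, v}" "e \<in> E'" by auto
    then have "c' e = c e" unfolding c'_def by simp
    with c'0 \<open>e \<in> E'\<close> show "c e = 0" by simp
  qed
  have "c' {u, v} = lam" unfolding c'_def by simp
  with c'0 uvE show "lam = 0" by simp
qed

lemma caseA:
  assumes aV: "a \<notin> V'" and bV: "b \<notin> V'" and ab: "a \<noteq> b"
    and fE': "finite E'" and EV: "\<forall>e\<in>E'. e \<subseteq> V'"
    and uvE: "{u, v} \<in> E'" and indep: "rows_lin_indep E' p"
    and Na: "Na = {u, v, x}" "distinct [u, v, x]" "Na \<subseteq> V'"
    and Nb: "Nb = {y1, y2, y3}" "distinct [y1, y2, y3]" "Nb \<subseteq> V'"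
    and m: "m = p u + (1/2) *\<^sub>R (p v - p u)"
    and C1: "det3 (p v - p u) (m - p x) (m - p b) \<noteq> 0"
    and C2: "det3 (p y1 - p b) (p b - p y2) (p b - p y3) \<noteq> 0"
  shows "rows_lin_indep ((E' - {{u, v}}) \<union> {{a, b}} \<union> (\<lambda>x. {a, x}) ` Na \<union> (\<lambda>y. {b, y}) ` Nb)
           (p(a := m, b := p b))"
  unfolding rows_lin_indep_def
proof (intro allI impI)
  fix c
  assume F: "\<forall>j. (\<Sum>e\<in>(E' - {{u, v}}) \<union> {{a, b}} \<union> (\<lambda>x. {a, x}) ` Na \<union> (\<lambda>y. {b, y}) ` Nb.
               c e * rigidity_row (p(a := m, b := p b)) e j) = 0"
  have fNa: "finite Na" and fNb: "finite Nb" using Na Nb by simp_all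
  note ce = col_eqs[OF aV bV ab Na(3) Nb(3) fNa fNb fE' EV refl F]
  have A0: "c {a, b} *\<^sub>R (m - p b) + (c {a, u} *\<^sub>R (m - p u) + (c {a, v} *\<^sub>R (m - p v) + c {a, x} *\<^sub>R (m - p x))) = 0"
    using ce(1) Na(1,2) by simp
  have "((c {a, u} - c {a, v})/2) *\<^sub>R (p v - p u) + c {a, x} *\<^sub>R (m - p x) + c {a, b} *\<^sub>R (m - p b) =
     c {a, b} *\<^sub>R (m - p b) + (c {a, u} *\<^sub>R (m - p u) + (c {a, v} *\<^sub>R (m - p v) + c {a, x} *\<^sub>R (m - p x)))"
    unfolding m Finite_Cartesian_Product.vec_eq_iff by (simp add: field_simps)
  with A0 have "((c {a, u} - c {a, v})/2) *\<^sub>R (p v - p u) + c {a, x} *\<^sub>R (m - p x) + c {a, b} *\<^sub>R (m - p b) = 0"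
    by simp
  from det3_indep[OF C1 this] have "(c {a, u} - c {a, v})/2 = 0 \<and> c {a, x} = 0 \<and> c {a, b} = 0" .
  then have cau: "c {a, v} = c {a, u}" and cax: "c {a, x} = 0" and cab: "c {a, b} = 0" by auto
  have B0: "c {b, y1} *\<^sub>R (p b - p y1) + (c {b, y2} *\<^sub>R (p b - p y2) + c {b, y3} *\<^sub>R (p b - p y3)) = 0"
    using ce(2) Nb(1,2) cab by simp
  have "(- c {b, y1}) *\<^sub>R (p y1 - p b) + c {b, y2} *\<^sub>R (p b - p y2) + c {b, y3} *\<^sub>R (p b - p y3) =
      c {b, y1} *\<^sub>R (p b - p y1) + (c {b, y2} *\<^sub>R (p b - p y2) + c {b, y3} *\<^sub>R (p b - p y3))"
    unfolding Finite_Cartesian_Product.vec_eq_iff by (simp add: field_simps)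
  with B0 have "(- c {b, y1}) *\<^sub>R (p y1 - p b) + c {b, y2} *\<^sub>R (p b - p y2) + c {b, y3} *\<^sub>R (p b - p y3) = 0"
    by simp
  from det3_indep[OF C2 this] have "- c {b, y1} = 0 \<and> c {b, y2} = 0 \<and> c {b, y3} = 0" .
  then have cby: "\<forall>y\<in>Nb. c {b, y} = 0" using Nb(1) by auto
  have uv: "u \<noteq> v" using Na(2) by simp
  have Z: "(\<Sum>e\<in>E' - {{u, v}}. c e * rigidity_row p e (z, k)) + (c {a, u} / 2) * rigidity_row p {u, v} (z, k) = 0"
    if "z \<noteq> a" "z \<noteq> b" for z k
  proof -
    have "(if z \<in> Na then c {a, z} * vec_nth (p z - m) k else 0)
          + (if z \<in> Nb then c {b, z} * vec_nth (p z - p b) k else 0) = (c {a, u} / 2) * rigidity_row p {u, v} (z, k)"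
      using Na(1,2) cby cau cax unfolding row2[OF uv] m by (auto simp: field_simps)
    then show ?thesis using ce(3)[OF that, of k] by simp
  qed
  note cl = close_G'[OF indep uvE fE' EV aV bV Z]
  show "\<forall>e\<in>(E' - {{u, v}}) \<union> {{a, b}} \<union> (\<lambda>x. {a, x}) ` Na \<union> (\<lambda>y. {b, y}) ` Nb. c e = 0"
    using cl cby cau cax cab Na(1) by auto
qed

lemma caseB:
  assumes aV: "a \<notin> V'" and bV: "b \<notin> V'" and ab: "a \<noteq> b"
    and fE': "finite E'" and EV: "\<forall>e\<in>E'. e \<subseteq> V'"
    and uvE: "{u, v} \<in> E'" and uv: "u \<noteq> v" and indep: "rows_lin_indep E' p"
    and Na: "Na = {u, x1, x2}" "distinct [u, x1, x2]" "Na \<subseteq> V'" "v \<notin> Na"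
    and Nb: "Nb = {v, y1, y2}" "distinct [v, y1, y2]" "Nb \<subseteq> V'" "u \<notin> Nb"
    and ma: "ma = p u + (1/3) *\<^sub>R (p v - p u)"
    and mb: "mb = p u + (2/3) *\<^sub>R (p v - p u)"
    and C1: "det3 (p v - p u) (ma - p x1) (ma - p x2) \<noteq> 0"
    and C2: "det3 (p v - p u) (mb - p y1) (mb - p y2) \<noteq> 0"
  shows "rows_lin_indep ((E' - {{u, v}}) \<union> {{a, b}} \<union> (\<lambda>x. {a, x}) ` Na \<union> (\<lambda>y. {b, y}) ` Nb)
           (p(a := ma, b := mb))"
  unfolding rows_lin_indep_def
proof (intro allI impI)
  fix c
  assume F: "\<forall>j. (\<Sum>e\<in>(E' - {{u, v}}) \<union> {{a, b}} \<union> (\<lambda>x. {a, x}) ` Na \<union> (\<lambda>y. {b, y}) ` Nb.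
               c e * rigidity_row (p(a := ma, b := mb)) e j) = 0"
  have fNa: "finite Na" and fNb: "finite Nb" using Na Nb by simp_all
  note ce = col_eqs[OF aV bV ab Na(3) Nb(3) fNa fNb fE' EV refl F]
  have A0: "c {a, b} *\<^sub>R (ma - mb) + (c {a, u} *\<^sub>R (ma - p u) + (c {a, x1} *\<^sub>R (ma - p x1) + c {a, x2} *\<^sub>R (ma - p x2))) = 0"
    using ce(1) Na(1,2) by simp
  have "((c {a, u} - c {a, b})/3) *\<^sub>R (p v - p u) + c {a, x1} *\<^sub>R (ma - p x1) + c {a, x2} *\<^sub>R (ma - p x2) =
     c {a, b} *\<^sub>R (ma - mb) + (c {a, u} *\<^sub>R (ma - p u) + (c {a, x1} *\<^sub>R (ma - p x1) + c {a, x2} *\<^sub>R (ma - p x2)))"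
    unfolding ma mb Finite_Cartesian_Product.vec_eq_iff by (simp add: field_simps)
  with A0 have "((c {a, u} - c {a, b})/3) *\<^sub>R (p v - p u) + c {a, x1} *\<^sub>R (ma - p x1) + c {a, x2} *\<^sub>R (ma - p x2) = 0"
    by simp
  from det3_indep[OF C1 this] have "(c {a, u} - c {a, b})/3 = 0 \<and> c {a, x1} = 0 \<and> c {a, x2} = 0" .
  then have cau: "c {a, u} = c {a, b}" and cax: "c {a, x1} = 0" "c {a, x2} = 0" by auto
  have B0: "c {a, b} *\<^sub>R (mb - ma) + (c {b, v} *\<^sub>R (mb - p v) + (c {b, y1} *\<^sub>R (mb - p y1) + c {b, y2} *\<^sub>R (mb - p y2))) = 0"
    using ce(2) Nb(1,2) by simp
  have "((c {a, b} - c {b, v})/3) *\<^sub>R (p v - p u) + c {b, y1} *\<^sub>R (mb - p y1) + c {b, y2} *\<^sub>R (mb - p y2) =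
     c {a, b} *\<^sub>R (mb - ma) + (c {b, v} *\<^sub>R (mb - p v) + (c {b, y1} *\<^sub>R (mb - p y1) + c {b, y2} *\<^sub>R (mb - p y2)))"
    unfolding ma mb Finite_Cartesian_Product.vec_eq_iff by (simp add: field_simps)
  with B0 have "((c {a, b} - c {b, v})/3) *\<^sub>R (p v - p u) + c {b, y1} *\<^sub>R (mb - p y1) + c {b, y2} *\<^sub>R (mb - p y2) = 0"
    by simp
  from det3_indep[OF C2 this] have "(c {a, b} - c {b, v})/3 = 0 \<and> c {b, y1} = 0 \<and> c {b, y2} = 0" .
  then have cbv: "c {b, v} = c {a, b}" and cby: "c {b, y1} = 0" "c {b, y2} = 0" by auto
  have Z: "(\<Sum>e\<in>E' - {{u, v}}. c e * rigidity_row p e (z, k)) + (c {a, b} / 3) * rigidity_row p {u, v} (z, k) = 0"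
    if "z \<noteq> a" "z \<noteq> b" for z k
  proof -
    have "(if z \<in> Na then c {a, z} * vec_nth (p z - ma) k else 0)
          + (if z \<in> Nb then c {b, z} * vec_nth (p z - mb) k else 0) = (c {a, b} / 3) * rigidity_row p {u, v} (z, k)"
      using Na Nb cau cax cbv cby unfolding row2[OF uv] ma mb by (auto simp: field_simps)
    then show ?thesis using ce(3)[OF that, of k] by simp
  qed
  note cl = close_G'[OF indep uvE fE' EV aV bV Z]
  show "\<forall>e\<in>(E' - {{u, v}}) \<union> {{a, b}} \<union> (\<lambda>x. {a, x}) ` Na \<union> (\<lambda>y. {b, y}) ` Nb. c e = 0"
    using cl cau cax cbv cby Na(1) Nb(1) by auto
qed


lemma three_from_two:
  assumes "card N = 3" "u \<in> N" "v \<in> N" "u \<noteq> v"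
  obtains x where "N = {u, v, x}" "distinct [u, v, x]"
proof -
  have fN: "finite N" using assms(1) by (metis card.infinite zero_neq_numeral)
  have "card (N - {u, v}) = 1" using assms fN by (simp add: card_Diff_subset)
  then obtain x where x: "N - {u, v} = {x}" by (rule card_1_singletonE)
  then have "N = {u, v, x}" "distinct [u, v, x]" using assms(2,3,4) by auto
  then show ?thesis using that by blast
qed

lemma three_from_one:
  assumes "card N = 3" "u \<in> N"
  obtains x1 x2 where "N = {u, x1, x2}" "distinct [u, x1, x2]"
proof -
  have fN: "finite N" using assms(1) by (metis card.infinite zero_neq_numeral)
  have "card (N - {u}) = 2" using assms fN by simp
  then obtain x1 x2 where x: "N - {u} = {x1, x2}" "x1 \<noteq> x2" by (auto simp: card_2_iff)
  then have "N = {u, x1, x2}" "distinct [u, x1, x2]" using assms(2) by auto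
  then show ?thesis using that by blast
qed

lemma of_rat_half: "(of_rat (1/2) :: real) = 1/2" and of_rat_third: "(of_rat (1/3) :: real) = 1/3"
  and of_rat_twothird: "(of_rat (2/3) :: real) = 2/3"
  by (simp_all add: of_rat_divide)

lemma extA:
  assumes fV: "finite V" and gen: "generic3 V p" and VV: "V' \<subseteq> V" "a \<in> V" "b \<in> V"
    and aV: "a \<notin> V'" and bV: "b \<notin> V'" and ab: "a \<noteq> b"
    and fE': "finite E'" and EV: "\<forall>e\<in>E'. e \<subseteq> V'"
    and uvE: "{u, v} \<in> E'" and uv: "u \<noteq> v" and indep: "rows_lin_indep E' p"
    and Na: "card Na = 3" "Na \<subseteq> V'" "u \<in> Na" "v \<in> Na"
    and Nb: "card Nb = 3" "Nb \<subseteq> V'"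
  shows "\<exists>q. rows_lin_indep ((E' - {{u, v}}) \<union> {{a, b}} \<union> (\<lambda>x. {a, x}) ` Na \<union> (\<lambda>y. {b, y}) ` Nb) q"
proof -
  obtain x where x: "Na = {u, v, x}" "distinct [u, v, x]" using three_from_two[OF Na(1,3,4) uv] by blast
  obtain y1 y2 y3 where y: "Nb = {y1, y2, y3}" "distinct [y1, y2, y3]"
    using Nb(1) unfolding card_3_iff by auto
  have xin: "u \<in> V'" "v \<in> V'" "x \<in> V'" using x Na(2) by auto
  have yin: "y1 \<in> V'" "y2 \<in> V'" "y3 \<in> V'" using y Nb(2) by auto
  define m where "m = p u + (1/2) *\<^sub>R (p v - p u)"
  have C1: "det3 (p v - p u) (m - p x) (m - p b) \<noteq> 0"
    using nondeg[OF fV gen, of u v x b "1/2"] xin VV x(2) bV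
    unfolding m_def of_rat_half by auto
  have C2: "det3 (p y1 - p b) (p b - p y2) (p b - p y3) \<noteq> 0"
    using nondeg[OF fV gen, of b y1 y2 y3 0] yin VV y(2) bV by auto
  show ?thesis
    using caseA[OF aV bV ab fE' EV uvE indep x(1,2) Na(2) y(1,2) Nb(2) m_def C1 C2] by blast
qed

lemma extB:
  assumes fV: "finite V" and gen: "generic3 V p" and VV: "V' \<subseteq> V" "a \<in> V" "b \<in> V"
    and aV: "a \<notin> V'" and bV: "b \<notin> V'" and ab: "a \<noteq> b"
    and fE': "finite E'" and EV: "\<forall>e\<in>E'. e \<subseteq> V'"
    and uvE: "{u, v} \<in> E'" and uv: "u \<noteq> v" and indep: "rows_lin_indep E' p"
    and Na: "card Na = 3" "Na \<subseteq> V'" "u \<in> Na" "v \<notin> Na"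
    and Nb: "card Nb = 3" "Nb \<subseteq> V'" "v \<in> Nb" "u \<notin> Nb"
  shows "\<exists>q. rows_lin_indep ((E' - {{u, v}}) \<union> {{a, b}} \<union> (\<lambda>x. {a, x}) ` Na \<union> (\<lambda>y. {b, y}) ` Nb) q"
proof -
  obtain x1 x2 where x: "Na = {u, x1, x2}" "distinct [u, x1, x2]" using three_from_one[OF Na(1,3)] by blast
  obtain y1 y2 where y: "Nb = {v, y1, y2}" "distinct [v, y1, y2]" using three_from_one[OF Nb(1,3)] by blast
  have xin: "u \<in> V'" "x1 \<in> V'" "x2 \<in> V'" using x Na(2) by auto
  have yin: "v \<in> V'" "y1 \<in> V'" "y2 \<in> V'" using y Nb(2) by auto
  have xv: "x1 \<noteq> v" "x2 \<noteq> v" using x(1) Na(4) by auto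
  have yu: "y1 \<noteq> u" "y2 \<noteq> u" using y(1) Nb(4) by auto
  define ma where "ma = p u + (1/3) *\<^sub>R (p v - p u)"
  define mb where "mb = p u + (2/3) *\<^sub>R (p v - p u)"
  have C1: "det3 (p v - p u) (ma - p x1) (ma - p x2) \<noteq> 0"
    using nondeg[OF fV gen, of u v x1 x2 "1/3"] xin yin VV x(2) xv uv
    unfolding ma_def of_rat_third by auto
  have C2: "det3 (p v - p u) (mb - p y1) (mb - p y2) \<noteq> 0"
    using nondeg[OF fV gen, of u v y1 y2 "2/3"] xin yin VV y(2) yu uv
    unfolding mb_def of_rat_twothird by auto
  show ?thesis
    using caseB[OF aV bV ab fE' EV uvE uv indep x(1,2) Na(2,4) y(1,2) Nb(2,4) ma_def mb_def C1 C2] by blast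
qed

theorem lemma5p7:
  fixes V' V :: "'a set" and E' E :: "'a set set"
  assumes "simple_graph V' E'"
    and "R3_independent V' E'"
    and "double_1_extension V' E' V E"
  shows "R3_independent V E"
proof -
  obtain u v a b Na Nb where uvE: "{u, v} \<in> E'" and aV: "a \<notin> V'" and bV: "b \<notin> V'" and ab: "a \<noteq> b"
    and NaV: "Na \<subseteq> V'" and NbV: "Nb \<subseteq> V'" and cNa: "card Na = 3" and cNb: "card Nb = 3"
    and uN: "u \<in> Na \<union> Nb" and vN: "v \<in> Na \<union> Nb" and Vdef: "V = V' \<union> {a, b}"
    and Edef: "E = (E' - {{u, v}}) \<union> {{a, b}} \<union> ((\<lambda>x. {a, x}) ` Na) \<union> ((\<lambda>y. {b, y}) ` Nb)"
    using assms(3) unfolding double_1_extension_def by blast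
  have fV': "finite V'" and EV: "\<forall>e\<in>E'. e \<subseteq> V'" and E2: "\<forall>e\<in>E'. card e = 2"
    using assms(1) unfolding simple_graph_def by auto
  have fE': "finite E'" using fV' EV by (meson Pow_iff finite_Pow_iff finite_subset subsetI)
  have uv: "u \<noteq> v" using E2 uvE by fastforce
  have fV: "finite V" using fV' Vdef by simp
  have VV: "V' \<subseteq> V" "a \<in> V" "b \<in> V" using Vdef by auto
  have EVV: "\<forall>e\<in>E. e \<subseteq> V" using EV NaV NbV unfolding Edef Vdef by auto
  have Eswap: "(E' - {{u, v}}) \<union> {{b, a}} \<union> ((\<lambda>x. {b, x}) ` Nb) \<union> ((\<lambda>y. {a, y}) ` Na) = E"
    unfolding Edef by (auto simp: insert_commute)
  show ?thesis unfolding R3_independent_def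
  proof (intro allI impI)
    fix p assume gen: "generic3 V p"
    have "generic3 V' p" unfolding generic3_def
      using alg_indep_subset[OF gen[unfolded generic3_def], of "V' \<times> UNIV"] VV(1) fV by auto
    then have indep: "rows_lin_indep E' p" using assms(2) unfolding R3_independent_def by blast
    have "\<exists>q. rows_lin_indep E q"
    proof (cases "u \<in> Na \<and> v \<in> Na")
      case True
      then show ?thesis using extA[OF fV gen VV aV bV ab fE' EV uvE uv indep cNa NaV _ _ cNb NbV]
        unfolding Edef by blast
    next
      case nA: False
      show ?thesis
      proof (cases "u \<in> Nb \<and> v \<in> Nb")
        case True
        then show ?thesis using extA[OF fV gen VV(1,3,2) bV aV ab[symmetric] fE' EV uvE uv indep cNb NbV _ _ cNa NaV]
          unfolding Eswap by blast
      next
        case nB: False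
        show ?thesis
        proof (cases "u \<in> Na")
          case True
          then have "v \<notin> Na" "v \<in> Nb" "u \<notin> Nb" using nA nB vN by auto
          then show ?thesis using extB[OF fV gen VV aV bV ab fE' EV uvE uv indep cNa NaV True _ cNb NbV]
            unfolding Edef by blast
        next
          case False
          then have "u \<in> Nb" "v \<notin> Nb" "v \<in> Na" using nA nB uN vN by auto
          then show ?thesis using extB[OF fV gen VV(1,3,2) bV aV ab[symmetric] fE' EV uvE uv indep cNb NbV _ _ cNa NaV] False
            unfolding Eswap by blast
        qed
      qed
    qed
    then obtain q where "rows_lin_indep E q" by blast
    then show "rows_lin_indep E p" using indep_transfer[OF fV EVV gen] by blast
  qed
qed

end
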